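(* Let $G$ be a graph, $\mathscr{C}$ a skew graph category and $F=\{(K,g_{\mathbf{a}}^{-1}g_{\mathbf{b}})\mid(K,\mathbf{a},\mathbf{b})\in\mathscr{C}\}$ the corresponding graph fibration. Let $K$ be the greatest subgraph of $G$ contained in $F$, i.e. a subgraph $K\subset G$ with $F(K)\ne\emptyset$ such that every subgraph $H\subset G$ with $F(H)\neq\emptyset$ satisfies $H\subset K$. Then for all $k,l\in\mathbb{N}_0$ the vector space $\mathscr{C}^G(k,l)$ has the linear basis $\{\hat T^G_{(K,\mathbf{a},\mathbf{b})}\mid[\mathbf{a},\mathbf{b}]\in W^{\mathscr{C}}_K(k,l)\}$.
   Context: Graphs are finite, undirected, without multiple edges, loops allowed, up to isomorphism; $N_k$ is the edgeless graph on $k$ vertices; graph homomorphisms map edges (including loops) to edges; $H\subset G$ means $H$ is (isomorphic to) a subgraph of $G$. $\mathbb{Z}_2^{*V}$ is the group generated by the set $V$ subject to $v^2=e$; $g_{\mathbf{a}}$ is the product of the entries of a tuple $\mathbf{a}$. A vertex overlap of graphs $K,H$ is a subset $f\subset V(K)\times V(H)$ in which each vertex occurs at most once; $K\cup_fH$ is the quotient of $K\sqcup H$ identifying $v$ with $w$ for $(v,w)\in f$, with induced maps $f_K,f_H$. Bilabelled graph: $(K,\mathbf{a},\mathbf{b})$, $\mathbf{a}\in V(K)^k$, $\mathbf{b}\in V(K)^l$, up to isomorphism preserving tuples; $\mathscr{C}(k,l)$ those in $\mathscr{C}$ with $k$ inputs, $l$ outputs. Operations: $f$-union $(K,\mathbf{a},\mathbf{b})\cup_f(H,\mathbf{c},\mathbf{d})=(K\cup_fH,f_K(\mathbf{a})f_H(\mathbf{c}),f_K(\mathbf{b})f_H(\mathbf{d}))$;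 composition (for $|\mathbf{b}|=|\mathbf{c}|$) $(H,\mathbf{c},\mathbf{d})\cdot(K,\mathbf{a},\mathbf{b})=(H\cdot K,\mathbf{a},\mathbf{d})$ with $H\cdot K$ the quotient of $K\sqcup H$ identifying $b_i$ with $c_i$; involution swaps the tuples. $\ker\mathbf{b}$ is the partition of positions by equal entries. A skew graph category is a set of bilabelled graphs containing $(N_0,\emptyset,\emptyset)$, $(M,(v),(v))$, $(M,\emptyset,(v,v))$ ($M$ the one-vertex loopless graph), closed under all $f$-unions, under compositions $\mathbf{H}\cdot\mathbf{K}$ with $\mathbf{K}=(K,\mathbf{a},\mathbf{b}),\mathbf{H}=(H,\mathbf{c},\mathbf{d})$, $\ker\mathbf{b}=\ker\mathbf{c}$, and under involution. For a set $F$ of pairs $(K,a)$ (up to isomorphism), $F(K):=\{a\mid(K,a)\in F\}$. With the vertices of $G$ labelled $1,\dots,n$, $\hat T^G_{(K,\mathbf{a},\mathbf{b})}\colon(\mathbb{C}^n)^{\otimes k}\to(\mathbb{C}^n)^{\otimes l}$ has entries $\#\{\phi\colon K\to G\text{ injective homomorphism}\mid\phi(\mathbf{a})=\mathbf{i},\phi(\mathbf{b})=\mathbf{j}\}$ at position $(\mathbf{j},\mathbf{i})$, and $\mathscr{C}^G(k,l):=\mathrm{span}\{\hat T^G_{\mathbf{H}}\mid\mathbf{H}\in\mathscr{C}(k,l)\}$. $W_K(k,l):=(V(K)^k\times V(K)^l)/\mathrm{Aut}\,K$, with classes $[\mathbf{a},\mathbf{b}]$; $W^{\mathscr{C}}_K(k,l):=\{[\mathbf{a},\mathbf{b}]\in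 W_K(k,l)\mid(K,\mathbf{a},\mathbf{b})\in\mathscr{C}(k,l)\}$ ($\hat T^G_{(K,\mathbf{a},\mathbf{b})}$ depends only on the class). *)

theory Defs
  imports Complex_Main "HOL-Library.FuncSet" "HOL-Library.Function_Algebras"
begin

text \<open>A graph is a pair (V, E): a vertex set of natural numbers and a set of edges,
  each edge being a set of one (a loop) or two vertices. Graphs are considered up to
  isomorphism; concretely we work with representatives on natural-number vertices.\<close>

type_synonym graph = "nat set \<times> nat set set"

definition verts :: "graph \<Rightarrow> nat set" where "verts G = fst G"
definition edges :: "graph \<Rightarrow> nat set set" where "edges G = snd G"

definition wf_graph :: "graph \<Rightarrow> bool" where
  "wf_graph G \<longleftrightarrow> finite (verts G) \<and>
     (\<forall>e\<in>edges G. e \<subseteq> verts G \<and> (card e = 1 \<or> card e = 2))"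

definition is_hom :: "graph \<Rightarrow> graph \<Rightarrow> (nat \<Rightarrow> nat) \<Rightarrow> bool" where
  "is_hom K G \<phi> \<longleftrightarrow> \<phi> ` verts K \<subseteq> verts G \<and> (\<forall>e\<in>edges K. \<phi> ` e \<in> edges G)"

text \<open>H \<subset> G: H is isomorphic to a subgraph of G (i.e. H embeds injectively into G)\<close>
definition subgraph_of :: "graph \<Rightarrow> graph \<Rightarrow> bool" where
  "subgraph_of H G \<longleftrightarrow> (\<exists>\<phi>. inj_on \<phi> (verts H) \<and> is_hom H G \<phi>)"

definition is_iso :: "graph \<Rightarrow> graph \<Rightarrow> (nat \<Rightarrow> nat) \<Rightarrow> bool" where
  "is_iso K K' \<phi> \<longleftrightarrow> bij_betw \<phi> (verts K) (verts K') \<and>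
     (\<forall>e. e \<subseteq> verts K \<longrightarrow> (e \<in> edges K \<longleftrightarrow> \<phi> ` e \<in> edges K'))"

type_synonym blg = "graph \<times> nat list \<times> nat list"

definition wf_blg :: "blg \<Rightarrow> bool" where
  "wf_blg X = (case X of (K, a, b) \<Rightarrow> wf_graph K \<and> set a \<subseteq> verts K \<and> set b \<subseteq> verts K)"

definition vertex_overlap :: "graph \<Rightarrow> graph \<Rightarrow> (nat \<times> nat) set \<Rightarrow> bool" where
  "vertex_overlap K H f \<longleftrightarrow> f \<subseteq> verts K \<times> verts H \<and>
     (\<forall>(v,w)\<in>f. \<forall>(v',w')\<in>f. (v = v' \<longleftrightarrow> w = w'))"

text \<open>L together with the maps p = f_K and q = f_H is (a representative of) the quotient
  K \<union>_f H of the disjoint union K \<sqcup> H identifying v with w for (v,w) \<in> f.\<close>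
definition is_glue :: "graph \<Rightarrow> graph \<Rightarrow> (nat \<times> nat) set \<Rightarrow> graph \<Rightarrow>
    (nat \<Rightarrow> nat) \<Rightarrow> (nat \<Rightarrow> nat) \<Rightarrow> bool" where
  "is_glue K H f L p q \<longleftrightarrow> wf_graph L \<and>
     inj_on p (verts K) \<and> inj_on q (verts H) \<and>
     p ` verts K \<union> q ` verts H = verts L \<and>
     (\<forall>v\<in>verts K. \<forall>w\<in>verts H. p v = q w \<longleftrightarrow> (v, w) \<in> f) \<and>
     edges L = (image p) ` edges K \<union> (image q) ` edges H"

definition M_graph :: graph where "M_graph = ({0}, {})"
definition N0_graph :: graph where "N0_graph = ({}, {})"

text \<open>A skew graph category, represented as an isomorphism-closed set of (representatives
  of) bilabelled graphs.\<close>
definition skew_graph_category :: "blg set \<Rightarrow> bool" where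
  "skew_graph_category C \<longleftrightarrow>
     (\<forall>X\<in>C. wf_blg X) \<and>
     \<comment> \<open>elements are isomorphism classes\<close>
     (\<forall>K a b K' \<phi>. (K, a, b) \<in> C \<longrightarrow> wf_graph K' \<longrightarrow> is_iso K K' \<phi> \<longrightarrow>
         (K', map \<phi> a, map \<phi> b) \<in> C) \<and>
     (N0_graph, [], []) \<in> C \<and>
     (M_graph, [0], [0]) \<in> C \<and>
     (M_graph, [], [0, 0]) \<in> C \<and>
     \<comment> \<open>closed under all f-unions\<close>
     (\<forall>K a b H c d f L p q. (K, a, b) \<in> C \<longrightarrow> (H, c, d) \<in> C \<longrightarrow>
         vertex_overlap K H f \<longrightarrow> is_glue K H f L p q \<longrightarrow>
         (L, map p a @ map q c, map p b @ map q d) \<in> C) \<and>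
     \<comment> \<open>closed under compositions (H,c,d)\<cdot>(K,a,b) with ker b = ker c\<close>
     (\<forall>K a b H c d L p q. (K, a, b) \<in> C \<longrightarrow> (H, c, d) \<in> C \<longrightarrow>
         length b = length c \<longrightarrow>
         (\<forall>i<length b. \<forall>j<length b. b ! i = b ! j \<longleftrightarrow> c ! i = c ! j) \<longrightarrow>
         is_glue K H {(b ! i, c ! i) | i. i < length b} L p q \<longrightarrow>
         (L, map p a, map q d) \<in> C) \<and>
     \<comment> \<open>closed under involution\<close>
     (\<forall>K a b. (K, a, b) \<in> C \<longrightarrow> (K, b, a) \<in> C)"

text \<open>Elements of the free product of copies of Z_2 generated by V are represented by
  reduced words (no two equal adjacent letters); red computes the normal form of a word,
  so g_a = red a, and g_a^{-1} = red (rev a).\<close>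
fun red :: "nat list \<Rightarrow> nat list" where
  "red [] = []"
| "red (x # xs) = (case red xs of [] \<Rightarrow> [x] | y # ys \<Rightarrow> (if x = y then ys else x # y # ys))"

definition gprod :: "nat list \<Rightarrow> nat list" where "gprod a = red a"
definition ginv :: "nat list \<Rightarrow> nat list" where "ginv g = red (rev g)"
definition gmult :: "nat list \<Rightarrow> nat list \<Rightarrow> nat list" where "gmult g h = red (g @ h)"

definition fib :: "blg set \<Rightarrow> graph \<Rightarrow> nat list set" where
  "fib C K = {gmult (ginv (gprod a)) (gprod b) | a b. (K, a, b) \<in> C}"

type_synonym tensor = "nat list \<Rightarrow> nat list \<Rightarrow> complex"

text \<open>The entry at position (j, i) (j output tuple, i input tuple, both tuples of vertices
  of G) counts injective homomorphisms K \<rightarrow> G with \<phi>(a) = i, \<phi>(b) = j.\<close>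
definition That :: "graph \<Rightarrow> blg \<Rightarrow> tensor" where
  "That G X = (case X of (K, a, b) \<Rightarrow> (\<lambda>j i. of_nat (card
      {\<phi> \<in> verts K \<rightarrow>\<^sub>E verts G. inj_on \<phi> (verts K) \<and> is_hom K G \<phi> \<and>
          map \<phi> a = i \<and> map \<phi> b = j})))"

definition tscale :: "complex \<Rightarrow> tensor \<Rightarrow> tensor" where
  "tscale c T = (\<lambda>j i. c * T j i)"

definition CG :: "blg set \<Rightarrow> graph \<Rightarrow> nat \<Rightarrow> nat \<Rightarrow> tensor set" where
  "CG C G k l = module.span tscale
     {That G (K, a, b) | K a b. (K, a, b) \<in> C \<and> length a = k \<and> length b = l}"

definition Aut :: "graph \<Rightarrow> (nat \<Rightarrow> nat) set" where
  "Aut K = {\<phi>. is_iso K K \<phi>}"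

definition lclass :: "graph \<Rightarrow> nat list \<Rightarrow> nat list \<Rightarrow> (nat list \<times> nat list) set" where
  "lclass K a b = {(map \<phi> a, map \<phi> b) | \<phi>. \<phi> \<in> Aut K}"

definition W :: "graph \<Rightarrow> nat \<Rightarrow> nat \<Rightarrow> (nat list \<times> nat list) set set" where
  "W K k l = {lclass K a b | a b. length a = k \<and> length b = l \<and>
                 set a \<subseteq> verts K \<and> set b \<subseteq> verts K}"

definition WC :: "blg set \<Rightarrow> graph \<Rightarrow> nat \<Rightarrow> nat \<Rightarrow> (nat list \<times> nat list) set set" where
  "WC C K k l = {w \<in> W K k l. \<exists>a b. w = lclass K a b \<and> (K, a, b) \<in> C}"

text \<open>T-hat of a class [a,b] (well defined: it depends only on the class)\<close>
definition That_cls :: "graph \<Rightarrow> graph \<Rightarrow> (nat list \<times> nat list) set \<Rightarrow> tensor" where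
  "That_cls G K w = (let (a, b) = (SOME p. p \<in> w) in That G (K, a, b))"

end

theory Submission
  imports Defs
begin

lemma module_tscale: "module tscale"
  by unfold_locales (auto simp: tscale_def fun_eq_iff algebra_simps)

interpretation tm: module tscale by (rule module_tscale)

lemma sum_fun_app2: "(\<Sum>x\<in>A. (f x :: tensor)) j i = (\<Sum>x\<in>A. f x j i)"
proof (cases "finite A")
  case True then show ?thesis by (induction A rule: finite_induct) auto
qed auto

lemma wf_edges_finite: "wf_graph K \<Longrightarrow> finite (edges K)"
  proof -
  assume "wf_graph K"
  then have "edges K \<subseteq> Pow (verts K)" "finite (verts K)" unfolding wf_graph_def by auto
  then show ?thesis using finite_subset by blast
qed

lemma wf_edge_sub: "wf_graph K \<Longrightarrow> e \<in> edges K \<Longrightarrow> e \<subseteq> verts K"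
  unfolding wf_graph_def by auto

lemma graph_eta: "(verts K, edges K) = K"
  by (simp add: verts_def edges_def)

lemma skew_wf: assumes "skew_graph_category C" "(K,a,b) \<in> C" shows "wf_graph K \<and> set a \<subseteq> verts K \<and> set b \<subseteq> verts K"
proof -
  have "wf_blg (K,a,b)" using assms(1)[unfolded skew_graph_category_def, THEN conjunct1] assms(2) by blast
  then show ?thesis by (simp add: wf_blg_def)
qed

lemma skew_iso: assumes "skew_graph_category C" "(K, a, b) \<in> C" "wf_graph K'" "is_iso K K' \<phi>" shows
         "(K', map \<phi> a, map \<phi> b) \<in> C"
  using assms(1)[unfolded skew_graph_category_def, THEN conjunct2, THEN conjunct1, rule_format, OF assms(2-4)] .

lemma skew_N0: "skew_graph_category C \<Longrightarrow> (N0_graph, [], []) \<in> C"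
  unfolding skew_graph_category_def by (elim conjE)
lemma skew_M1: "skew_graph_category C \<Longrightarrow> (M_graph, [0], [0]) \<in> C"
  unfolding skew_graph_category_def by (elim conjE)
lemma skew_M2: "skew_graph_category C \<Longrightarrow> (M_graph, [], [0,0]) \<in> C"
  unfolding skew_graph_category_def by (elim conjE)
lemma skew_union: assumes "skew_graph_category C" "(K, a, b) \<in> C" "(H, c, d) \<in> C"
         "vertex_overlap K H f" "is_glue K H f L p q" shows
         "(L, map p a @ map q c, map p b @ map q d) \<in> C"
  using assms(1)[unfolded skew_graph_category_def, THEN conjunct2, THEN conjunct2, THEN conjunct2, THEN conjunct2, THEN conjunct2, THEN conjunct1, rule_format, OF assms(2-5)] .
lemma skew_comp: assumes "skew_graph_category C" "(K, a, b) \<in> C" "(H, c, d) \<in> C"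
         "length b = length c"
         "(\<forall>i<length b. \<forall>j<length b. b ! i = b ! j \<longleftrightarrow> c ! i = c ! j)"
         "is_glue K H {(b ! i, c ! i) | i. i < length b} L p q" shows
         "(L, map p a, map q d) \<in> C"
  using assms(1)[unfolded skew_graph_category_def, THEN conjunct2, THEN conjunct2, THEN conjunct2, THEN conjunct2, THEN conjunct2, THEN conjunct2, THEN conjunct1, rule_format, OF assms(2-4)] assms(5,6) by blast
lemma skew_inv: assumes "skew_graph_category C" "(K, a, b) \<in> C" shows "(K, b, a) \<in> C"
  using assms(1)[unfolded skew_graph_category_def, THEN conjunct2, THEN conjunct2, THEN conjunct2, THEN conjunct2, THEN conjunct2, THEN conjunct2, THEN conjunct2, rule_format, OF assms(2)] .

lemma glue_mem:
  assumes C: "skew_graph_category C"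
    and X: "(K1, a, b) \<in> C" and Y: "(H1, c, d) \<in> C"
    and p: "inj_on p (verts K1)" and q: "inj_on q (verts H1)"
  shows "((p ` verts K1 \<union> q ` verts H1, image p ` edges K1 \<union> image q ` edges H1),
           map p a @ map q c, map p b @ map q d) \<in> C"
proof -
  have wK: "wf_graph K1" and wH: "wf_graph H1"
    using skew_wf[OF C X] skew_wf[OF C Y] by auto
  define L where "L = (p ` verts K1 \<union> q ` verts H1, image p ` edges K1 \<union> image q ` edges H1)"
  define f where "f = {(v,w). v \<in> verts K1 \<and> w \<in> verts H1 \<and> p v = q w}"
  have vo: "vertex_overlap K1 H1 f"
    unfolding vertex_overlap_def f_def using p q by (auto simp: inj_on_def)
  have wfL: "wf_graph L"
  proof -
    have "finite (verts L)" using wK wH unfolding L_def wf_graph_def verts_def by auto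
    moreover have "\<forall>e\<in>edges L. e \<subseteq> verts L \<and> (card e = 1 \<or> card e = 2)"
    proof
      fix e assume "e \<in> edges L"
      then consider (k) e0 where "e0 \<in> edges K1" "e = p ` e0" | (h) e0 where "e0 \<in> edges H1" "e = q ` e0"
        unfolding L_def edges_def by auto
      then show "e \<subseteq> verts L \<and> (card e = 1 \<or> card e = 2)"
      proof cases
        case k
        have "e0 \<subseteq> verts K1" using wK k wf_edge_sub by blast
        then have "card e = card e0" using k p card_image inj_on_subset by metis
        then show ?thesis using k wK \<open>e0 \<subseteq> verts K1\<close> unfolding wf_graph_def L_def verts_def by auto
      next
        case h
        have "e0 \<subseteq> verts H1" using wH h wf_edge_sub by blast
        then have "card e = card e0" using h q card_image inj_on_subset by metis
        then show ?thesis using h wH \<open>e0 \<subseteq> verts H1\<close> unfolding wf_graph_def L_def verts_def by auto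
      qed
    qed
    ultimately show ?thesis unfolding wf_graph_def by blast
  qed
  have gl: "is_glue K1 H1 f L p q"
    unfolding is_glue_def using wfL p q by (auto simp: L_def f_def verts_def edges_def)
  show ?thesis
    using skew_union[OF C X Y vo gl] unfolding L_def .
qed

lemma comp_mem:
  assumes C: "skew_graph_category C"
    and X: "(K1, a, b) \<in> C" and Y: "(H1, b, d) \<in> C"
    and v: "verts K1 = set b" and e: "edges K1 \<subseteq> edges H1"
  shows "(H1, a, d) \<in> C"
proof -
  have wH: "wf_graph H1" and sb: "set b \<subseteq> verts H1"
    using skew_wf[OF C Y] by auto
  have gl: "is_glue K1 H1 {(b ! i, b ! i) | i. i < length b} H1 id id"
    unfolding is_glue_def using wH sb v e by (auto simp: in_set_conv_nth)
  have "(H1, map id a, map id d) \<in> C"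
    using skew_comp[OF C X Y _ _ gl] by simp
  then show ?thesis by simp
qed


lemma edgeless_id:
  assumes C: "skew_graph_category C"
  shows "((set w, {}), w, w) \<in> C"
proof (induction w rule: rev_induct)
  case Nil
  then show ?case using skew_N0[OF C] by (simp add: N0_graph_def)
next
  case (snoc x w)
  have "((id ` verts (set w, {}) \<union> (\<lambda>_. x) ` verts M_graph,
          image id ` edges (set w, {}) \<union> image (\<lambda>_. x) ` edges M_graph),
         map id w @ map (\<lambda>_. x) [0], map id w @ map (\<lambda>_. x) [0]) \<in> C"
    using glue_mem[OF C snoc.IH skew_M1[OF C], where p=id and q="\<lambda>_. x"] by (simp add: M_graph_def verts_def)
  then show ?case by (simp add: M_graph_def verts_def edges_def insert_commute)
qed

lemma edgeless_cap:
  assumes C: "skew_graph_category C"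
  shows "((set w \<union> {x}, {}), w, w @ [x, x]) \<in> C"
proof -
  have "((id ` verts (set w, {}) \<union> (\<lambda>_. x) ` verts M_graph,
          image id ` edges (set w, {}) \<union> image (\<lambda>_. x) ` edges M_graph),
         map id w @ map (\<lambda>_. x) [], map id w @ map (\<lambda>_. x) [0,0]) \<in> C"
    using glue_mem[OF C edgeless_id[OF C] skew_M2[OF C], where p=id and q="\<lambda>_. x"] by (simp add: M_graph_def verts_def)
  then show ?thesis by (simp add: M_graph_def verts_def edges_def)
qed

lemma remove_last_input:
  assumes C: "skew_graph_category C" and X: "(K, a @ [x], b) \<in> C"
  shows "(K, a, b @ [x]) \<in> C"
proof -
  have w: "wf_graph K" "set a \<subseteq> verts K" "x \<in> verts K" using skew_wf[OF C X] by auto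
  have "((id ` verts K \<union> (\<lambda>_. x) ` verts M_graph,
          image id ` edges K \<union> image (\<lambda>_. x) ` edges M_graph),
         map id (a @ [x]) @ map (\<lambda>_. x) [0], map id b @ map (\<lambda>_. x) [0]) \<in> C"
    using glue_mem[OF C X skew_M1[OF C], where p=id and q="\<lambda>_. x"] by (simp add: M_graph_def verts_def)
  moreover have "(id ` verts K \<union> (\<lambda>_. x) ` verts M_graph,
          image id ` edges K \<union> image (\<lambda>_. x) ` edges M_graph) = K"
    using w(3) by (simp add: M_graph_def verts_def edges_def insert_absorb)
  ultimately have Y: "(K, a @ [x, x], b @ [x]) \<in> C" by simp
  show ?thesis
    by (rule comp_mem[OF C edgeless_cap[OF C] Y]) (use w in \<open>auto simp: verts_def edges_def\<close>)
qed

lemma remove_inputs: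
  assumes C: "skew_graph_category C"
  shows "(K, a, b) \<in> C \<Longrightarrow> (K, [], b @ rev a) \<in> C"
proof (induction a arbitrary: b rule: rev_induct)
  case Nil
  then show ?case by simp
next
  case (snoc x a)
  from snoc.IH[OF remove_last_input[OF C snoc.prems]] show ?case by simp
qed

lemma empty_labels:
  assumes C: "skew_graph_category C" and X: "(K, a, b) \<in> C"
  shows "(K, [], []) \<in> C"
proof -
  have w: "wf_graph K" using skew_wf[OF C X] by auto
  then have "finite (verts K)" unfolding wf_graph_def by (elim conjE)
  then obtain vs where vs: "set vs = verts K" using finite_list by blast
  have "((id ` verts K \<union> id ` verts (set vs, {}),
          image id ` edges K \<union> image id ` edges (set vs, {})),
         map id a @ map id vs, map id b @ map id vs) \<in> C"
    using glue_mem[OF C X edgeless_id[OF C], where p=id and q=id] by simp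
  moreover have "(id ` verts K \<union> id ` verts (set vs, {}),
          image id ` edges K \<union> image id ` edges (set vs, {})) = K"
    using vs by (simp add: verts_def edges_def)
  ultimately have Y: "(K, a @ vs, b @ vs) \<in> C" by simp
  define d where "d = b @ vs @ rev (a @ vs)"
  have Z: "(K, [], d) \<in> C" using remove_inputs[OF C Y] by (simp add: d_def)
  have "set d \<subseteq> verts K" using skew_wf[OF C Z] by blast
  moreover have "verts K \<subseteq> set d" using vs by (auto simp: d_def)
  ultimately have sd: "verts K = set d" by blast
  show ?thesis
    using comp_mem[OF C Z skew_inv[OF C Z] sd] by blast
qed


lemma verts_pair[simp]: "verts (V, E) = V" and edges_pair[simp]: "edges (V, E) = E"
  by (simp_all add: verts_def edges_def)

lemma fib_ne: "(X, a, b) \<in> C \<Longrightarrow> fib C X \<noteq> {}"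
  unfolding fib_def by blast

definition Phi :: "graph \<Rightarrow> graph \<Rightarrow> (nat \<Rightarrow> nat) set" where
  "Phi G H = {\<phi> \<in> verts H \<rightarrow>\<^sub>E verts G. inj_on \<phi> (verts H) \<and> is_hom H G \<phi>}"

lemma That_eq: "That G (H, a, b) j i = of_nat (card {\<phi> \<in> Phi G H. map \<phi> a = i \<and> map \<phi> b = j})"
  unfolding That_def Phi_def by simp

lemma wf_finite: "wf_graph K \<Longrightarrow> finite (verts K)"
  unfolding wf_graph_def by (elim conjE)

lemma wf_edges_Pow: "wf_graph K \<Longrightarrow> edges K \<subseteq> Pow (verts K)"
  using wf_edge_sub by blast

lemma edge_card_le:
  assumes "wf_graph L" "wf_graph K" "inj_on \<rho> (verts L)" "is_hom L K \<rho>"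
  shows "card (edges L) \<le> card (edges K)"
proof -
  have "inj_on (image \<rho>) (edges L)"
    using inj_on_image_Pow[OF assms(3)] wf_edges_Pow[OF assms(1)] inj_on_subset by blast
  moreover have "image \<rho> ` edges L \<subseteq> edges K" using assms(4) unfolding is_hom_def by blast
  ultimately show ?thesis using card_inj_on_le wf_edges_finite[OF assms(2)] by blast
qed

lemma edge_card_image:
  assumes "wf_graph K" "inj_on \<theta> (verts K)"
  shows "card (image \<theta> ` edges K) = card (edges K)" "inj_on (image \<theta>) (edges K)"
proof -
  show "inj_on (image \<theta>) (edges K)"
    using inj_on_image_Pow[OF assms(2)] wf_edges_Pow[OF assms(1)] inj_on_subset by blast
  then show "card (image \<theta> ` edges K) = card (edges K)" by (rule card_image)
qed

lemma iso_id: "is_iso K K id"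
  unfolding is_iso_def by simp

lemma iso_comp:
  assumes "is_iso K K \<sigma>" "is_iso K K \<tau>" shows "is_iso K K (\<tau> \<circ> \<sigma>)"
proof -
  have b1: "bij_betw \<sigma> (verts K) (verts K)" and b2: "bij_betw \<tau> (verts K) (verts K)"
    using assms unfolding is_iso_def by auto
  have "bij_betw (\<tau> \<circ> \<sigma>) (verts K) (verts K)" using bij_betw_trans[OF b1 b2] .
  moreover have "e \<in> edges K \<longleftrightarrow> (\<tau> \<circ> \<sigma>) ` e \<in> edges K" if "e \<subseteq> verts K" for e
  proof -
    have "\<sigma> ` e \<subseteq> verts K" using that b1 bij_betw_imp_surj_on by blast
    have 1: "e \<in> edges K \<longleftrightarrow> \<sigma> ` e \<in> edges K" using assms(1) that unfolding is_iso_def by blast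
    have 2: "\<sigma> ` e \<in> edges K \<longleftrightarrow> \<tau> ` \<sigma> ` e \<in> edges K"
      using assms(2) \<open>\<sigma> ` e \<subseteq> verts K\<close> unfolding is_iso_def by blast
    show ?thesis using 1 2 by (simp add: image_comp)
  qed
  ultimately show ?thesis unfolding is_iso_def by blast
qed

lemma iso_inv:
  assumes "is_iso K K \<sigma>" shows "is_iso K K (inv_into (verts K) \<sigma>)"
proof -
  have b1: "bij_betw \<sigma> (verts K) (verts K)" using assms unfolding is_iso_def by auto
  have "bij_betw (inv_into (verts K) \<sigma>) (verts K) (verts K)" using bij_betw_inv_into[OF b1] .
  moreover have "e \<in> edges K \<longleftrightarrow> inv_into (verts K) \<sigma> ` e \<in> edges K" if "e \<subseteq> verts K" for e
  proof -
    let ?e = "inv_into (verts K) \<sigma> ` e"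
    have "?e \<subseteq> verts K" using that bij_betw_inv_into[OF b1] bij_betw_imp_surj_on by blast
    moreover have "\<sigma> ` ?e = e" using image_inv_into_cancel[OF bij_betw_imp_surj_on[OF b1] that] .
    ultimately show ?thesis using assms unfolding is_iso_def by metis
  qed
  ultimately show ?thesis unfolding is_iso_def by blast
qed

lemma map_inv_cancel:
  assumes "is_iso K K \<sigma>" "set a \<subseteq> verts K"
  shows "map (inv_into (verts K) \<sigma>) (map \<sigma> a) = a"
proof -
  have "inj_on \<sigma> (verts K)" using assms(1) unfolding is_iso_def bij_betw_def by blast
  then show ?thesis using assms(2) by (induction a) auto
qed

lemma lclass_sym:
  assumes "set a \<subseteq> verts K" "set b \<subseteq> verts K" "(x, y) \<in> lclass K a b"
  shows "lclass K x y = lclass K a b"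
proof -
  obtain \<sigma> where s: "is_iso K K \<sigma>" "x = map \<sigma> a" "y = map \<sigma> b"
    using assms(3) unfolding lclass_def Aut_def by blast
  show ?thesis
  proof
    show "lclass K x y \<subseteq> lclass K a b"
    proof
      fix z assume "z \<in> lclass K x y"
      then obtain \<tau> where t: "is_iso K K \<tau>" "z = (map \<tau> x, map \<tau> y)"
        unfolding lclass_def Aut_def by blast
      then have "z = (map (\<tau> \<circ> \<sigma>) a, map (\<tau> \<circ> \<sigma>) b)" using s by simp
      then show "z \<in> lclass K a b" unfolding lclass_def Aut_def using iso_comp[OF s(1) t(1)] by blast
    qed
  next
    show "lclass K a b \<subseteq> lclass K x y"
    proof
      fix z assume "z \<in> lclass K a b"
      then obtain \<tau> where t: "is_iso K K \<tau>" "z = (map \<tau> a, map \<tau> b)"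
        unfolding lclass_def Aut_def by blast
      let ?s = "inv_into (verts K) \<sigma>"
      have "map (\<tau> \<circ> ?s) x = map \<tau> a" "map (\<tau> \<circ> ?s) y = map \<tau> b"
        using map_inv_cancel[OF s(1) assms(1)] map_inv_cancel[OF s(1) assms(2)] s
        by (metis map_map)+
      then have "z = (map (\<tau> \<circ> ?s) x, map (\<tau> \<circ> ?s) y)" using t by simp
      then show "z \<in> lclass K x y" unfolding lclass_def Aut_def using iso_comp[OF iso_inv[OF s(1)] t(1)] by blast
    qed
  qed
qed

lemma lclass_self: "(a, b) \<in> lclass K a b"
  unfolding lclass_def Aut_def using iso_id[of K] by (metis (mono_tags, lifting) list.map_id mem_Collect_eq)

lemma That_card_le:
  assumes wK: "wf_graph K" and s: "is_iso K K \<sigma>" and sc: "set c \<subseteq> verts K" "set d \<subseteq> verts K"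
    and fG: "finite (verts G)"
  shows "card {\<phi> \<in> Phi G K. map \<phi> (map \<sigma> c) = i \<and> map \<phi> (map \<sigma> d) = j}
       \<le> card {\<phi> \<in> Phi G K. map \<phi> c = i \<and> map \<phi> d = j}"
proof -
  let ?A = "{\<phi> \<in> Phi G K. map \<phi> (map \<sigma> c) = i \<and> map \<phi> (map \<sigma> d) = j}"
  let ?B = "{\<phi> \<in> Phi G K. map \<phi> c = i \<and> map \<phi> d = j}"
  let ?F = "\<lambda>\<phi>. restrict (\<phi> \<circ> \<sigma>) (verts K)"
  have b: "bij_betw \<sigma> (verts K) (verts K)" using s unfolding is_iso_def by blast
  then have si: "inj_on \<sigma> (verts K)" and so: "\<sigma> ` verts K = verts K" unfolding bij_betw_def by auto
  have finB: "finite ?B"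
  proof (rule finite_subset)
    show "?B \<subseteq> verts K \<rightarrow>\<^sub>E verts G" unfolding Phi_def by blast
    show "finite (verts K \<rightarrow>\<^sub>E verts G)" by (intro finite_PiE wf_finite[OF wK] fG)
  qed
  have into: "?F ` ?A \<subseteq> ?B"
  proof
    fix \<psi> assume "\<psi> \<in> ?F ` ?A"
    then obtain \<phi> where ph: "\<phi> \<in> ?A" "\<psi> = ?F \<phi>" by blast
    have p1: "\<phi> \<in> verts K \<rightarrow>\<^sub>E verts G" "inj_on \<phi> (verts K)" "is_hom K G \<phi>"
      using ph(1) unfolding Phi_def by auto
    have sx: "\<And>x. x \<in> verts K \<Longrightarrow> \<sigma> x \<in> verts K" using so by blast
    have "\<psi> \<in> verts K \<rightarrow>\<^sub>E verts G" using ph(2) p1(1) sx by (auto simp: PiE_iff)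
    moreover have "inj_on \<psi> (verts K)"
    proof -
      have "inj_on (\<phi> \<circ> \<sigma>) (verts K)" using comp_inj_on[OF si] p1(2) so by simp
      moreover have "\<forall>v\<in>verts K. ?F \<phi> v = (\<phi> \<circ> \<sigma>) v" by simp
      ultimately show ?thesis using ph(2) inj_on_cong by (metis (no_types, lifting))
    qed
    moreover have "is_hom K G \<psi>"
      unfolding is_hom_def
    proof (intro conjI ballI)
      show "\<psi> ` verts K \<subseteq> verts G" using ph(2) p1(1) sx by (auto simp: PiE_iff)
      fix e assume e: "e \<in> edges K"
      then have es: "e \<subseteq> verts K" using wf_edge_sub[OF wK] by blast
      then have "\<sigma> ` e \<in> edges K" using s e unfolding is_iso_def by blast
      then have "\<phi> ` \<sigma> ` e \<in> edges G" using p1(3) unfolding is_hom_def by blast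
      moreover have "\<psi> ` e = \<phi> ` \<sigma> ` e" using ph(2) es by (auto simp: image_iff)
      ultimately show "\<psi> ` e \<in> edges G" by simp
    qed
    moreover have m1: "map \<psi> c = map \<phi> (map \<sigma> c)" "map \<psi> d = map \<phi> (map \<sigma> d)"
      using ph(2) sc by auto
    moreover have m2: "map \<phi> (map \<sigma> c) = i" "map \<phi> (map \<sigma> d) = j" using ph(1) by blast+
    ultimately show "\<psi> \<in> ?B" unfolding Phi_def
      by (simp only: mem_Collect_eq m1 m2 simp_thms)
  qed
  have inj: "inj_on ?F ?A"
  proof
    fix \<phi>1 \<phi>2 assume a: "\<phi>1 \<in> ?A" "\<phi>2 \<in> ?A" "?F \<phi>1 = ?F \<phi>2"
    have e: "\<phi>1 \<in> extensional (verts K)" "\<phi>2 \<in> extensional (verts K)"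
      using a(1,2) unfolding Phi_def by (auto simp: PiE_def)
    have "\<phi>1 u = \<phi>2 u" if "u \<in> verts K" for u
    proof -
      have "u \<in> \<sigma> ` verts K" using so that by simp
      then obtain v where v: "v \<in> verts K" "u = \<sigma> v" by (rule imageE) auto
      have "?F \<phi>1 v = ?F \<phi>2 v" using a(3) by (rule fun_cong)
      then have "\<phi>1 (\<sigma> v) = \<phi>2 (\<sigma> v)" using v(1) by (simp only: restrict_apply' o_apply)
      then show ?thesis using v(2) by (simp only:)
    qed
    then show "\<phi>1 = \<phi>2" using extensionalityI[OF e(1) e(2)] by blast
  qed
  show ?thesis using card_inj_on_le[OF inj into finB] .
qed

lemma That_aut:
  assumes wK: "wf_graph K" and s: "is_iso K K \<sigma>" and sc: "set c \<subseteq> verts K" "set d \<subseteq> verts K"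
    and fG: "finite (verts G)"
  shows "That G (K, map \<sigma> c, map \<sigma> d) = That G (K, c, d)"
proof (rule ext, rule ext)
  fix j i
  have b: "bij_betw \<sigma> (verts K) (verts K)" using s unfolding is_iso_def by blast
  have sc': "set (map \<sigma> c) \<subseteq> verts K" "set (map \<sigma> d) \<subseteq> verts K"
    using sc bij_betw_imp_surj_on[OF b] by auto
  have 1: "card {\<phi> \<in> Phi G K. map \<phi> (map \<sigma> c) = i \<and> map \<phi> (map \<sigma> d) = j}
       \<le> card {\<phi> \<in> Phi G K. map \<phi> c = i \<and> map \<phi> d = j}"
    by (rule That_card_le[OF wK s sc fG])
  have 2: "card {\<phi> \<in> Phi G K. map \<phi> (map (inv_into (verts K) \<sigma>) (map \<sigma> c)) = i \<and>
        map \<phi> (map (inv_into (verts K) \<sigma>) (map \<sigma> d)) = j}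
       \<le> card {\<phi> \<in> Phi G K. map \<phi> (map \<sigma> c) = i \<and> map \<phi> (map \<sigma> d) = j}"
    by (rule That_card_le[OF wK iso_inv[OF s] sc' fG])
  show "That G (K, map \<sigma> c, map \<sigma> d) j i = That G (K, c, d) j i"
    using 1 2 unfolding That_eq map_inv_cancel[OF s sc(1)] map_inv_cancel[OF s sc(2)] by simp
qed

lemma restrict_Phi:
  assumes "wf_graph H" "inj_on \<phi> (verts H)" "is_hom H G \<phi>"
  shows "restrict \<phi> (verts H) \<in> Phi G H"
proof -
  have "restrict \<phi> (verts H) \<in> verts H \<rightarrow>\<^sub>E verts G" using assms(3) unfolding is_hom_def by auto
  moreover have "inj_on (restrict \<phi> (verts H)) (verts H)" using assms(2) by (simp add: inj_on_def)
  moreover have "is_hom H G (restrict \<phi> (verts H))"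
    unfolding is_hom_def
  proof (intro conjI ballI)
    show "restrict \<phi> (verts H) ` verts H \<subseteq> verts G" using assms(3) unfolding is_hom_def by auto
    fix e assume e: "e \<in> edges H"
    have "restrict \<phi> (verts H) ` e = \<phi> ` e" using wf_edge_sub[OF assms(1) e] by auto
    then show "restrict \<phi> (verts H) ` e \<in> edges G" using assms(3) e unfolding is_hom_def by simp
  qed
  ultimately show ?thesis unfolding Phi_def by blast
qed

lemma Phi_D:
  assumes "\<phi> \<in> Phi G H"
  shows "inj_on \<phi> (verts H)" "is_hom H G \<phi>" "\<phi> \<in> extensional (verts H)"
    "\<And>v. v \<in> verts H \<Longrightarrow> \<phi> v \<in> verts G"
  using assms unfolding Phi_def by (auto simp: PiE_def Pi_def)

lemma restrict_eq_ext:
  assumes "\<phi> \<in> extensional A" "\<And>v. v \<in> A \<Longrightarrow> f v = \<phi> v"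
  shows "restrict f A = \<phi>"
proof (rule ext)
  fix v show "restrict f A v = \<phi> v"
    using assms by (cases "v \<in> A") (auto simp: extensional_def)
qed

lemma finite_Phi:
  assumes "wf_graph H" "finite (verts G)" shows "finite (Phi G H)"
proof (rule finite_subset)
  show "Phi G H \<subseteq> verts H \<rightarrow>\<^sub>E verts G" unfolding Phi_def by blast
  show "finite (verts H \<rightarrow>\<^sub>E verts G)" by (intro finite_PiE wf_finite[OF assms(1)] assms(2))
qed

definition rep :: "(nat list \<times> nat list) set \<Rightarrow> nat list \<times> nat list" where
  "rep w = (SOME p. p \<in> w)"

lemma That_cls_alt: "That_cls G K w = That G (K, fst (rep w), snd (rep w))"
  unfolding That_cls_def rep_def by (simp add: case_prod_beta)

lemma rep_lclass: "rep (lclass K c d) \<in> lclass K c d"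
  unfolding rep_def using lclass_self by (metis someI_ex)

lemma lclass_elem:
  assumes "p \<in> lclass K c d" "set c \<subseteq> verts K" "set d \<subseteq> verts K"
  shows "\<exists>\<sigma>. is_iso K K \<sigma> \<and> p = (map \<sigma> c, map \<sigma> d)"
    "set (fst p) \<subseteq> verts K" "set (snd p) \<subseteq> verts K"
    "length (fst p) = length c" "length (snd p) = length d"
proof -
  obtain \<sigma> where s: "is_iso K K \<sigma>" "p = (map \<sigma> c, map \<sigma> d)"
    using assms(1) unfolding lclass_def Aut_def by blast
  then show "\<exists>\<sigma>. is_iso K K \<sigma> \<and> p = (map \<sigma> c, map \<sigma> d)" by blast
  have "\<sigma> ` verts K \<subseteq> verts K" using s(1) unfolding is_iso_def bij_betw_def by blast
  then show "set (fst p) \<subseteq> verts K" "set (snd p) \<subseteq> verts K" using s(2) assms(2,3) by auto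
  show "length (fst p) = length c" "length (snd p) = length d" using s(2) by auto
qed

lemma That_cls_eq:
  assumes wK: "wf_graph K" and fG: "finite (verts G)" and sc: "set c \<subseteq> verts K" "set d \<subseteq> verts K"
  shows "That_cls G K (lclass K c d) = That G (K, c, d)"
proof -
  obtain \<sigma> where s: "is_iso K K \<sigma>" "rep (lclass K c d) = (map \<sigma> c, map \<sigma> d)"
    using lclass_elem(1)[OF rep_lclass sc] by blast
  show ?thesis unfolding That_cls_alt s(2) using That_aut[OF wK s(1) sc fG] by simp
qed

lemma WC_rep:
  assumes "w \<in> WC C K k l" and C: "skew_graph_category C"
  shows "set (fst (rep w)) \<subseteq> verts K" "set (snd (rep w)) \<subseteq> verts K"
    "length (fst (rep w)) = k" "length (snd (rep w)) = l"
    "(K, fst (rep w), snd (rep w)) \<in> C" "lclass K (fst (rep w)) (snd (rep w)) = w"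
proof -
  obtain a b where ab: "w = lclass K a b" "length a = k" "length b = l" "set a \<subseteq> verts K" "set b \<subseteq> verts K"
    using assms(1) unfolding WC_def W_def by blast
  obtain a' b' where ab': "w = lclass K a' b'" "(K, a', b') \<in> C"
    using assms(1) unfolding WC_def by blast
  have sa': "set a' \<subseteq> verts K" "set b' \<subseteq> verts K" and wK: "wf_graph K" using skew_wf[OF C ab'(2)] by auto
  have r: "rep w \<in> w" using rep_lclass ab(1) by simp
  have r1: "rep w \<in> lclass K a b" using r ab(1) by simp
  have r2: "rep w \<in> lclass K a' b'" using r ab'(1) by simp
  note E = lclass_elem[OF r1 ab(4,5)]
  show "set (fst (rep w)) \<subseteq> verts K" "set (snd (rep w)) \<subseteq> verts K"
    "length (fst (rep w)) = k" "length (snd (rep w)) = l" using E ab by auto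
  obtain \<sigma> where s: "is_iso K K \<sigma>" "rep w = (map \<sigma> a', map \<sigma> b')"
    using lclass_elem(1)[OF r2 sa'] by blast
  show "(K, fst (rep w), snd (rep w)) \<in> C" using skew_iso[OF C ab'(2) wK s(1)] s(2) by simp
  show "lclass K (fst (rep w)) (snd (rep w)) = w"
    using lclass_sym[OF ab(4,5), of "fst (rep w)" "snd (rep w)"] r ab(1) by simp
qed

locale gsetup =
  fixes C :: "blg set" and G K :: graph
  assumes C: "skew_graph_category C"
    and wG: "wf_graph G"
    and wK: "wf_graph K"
    and subK: "subgraph_of K G"
    and fibK: "fib C K \<noteq> {}"
    and maxK: "\<And>H. wf_graph H \<Longrightarrow> subgraph_of H G \<Longrightarrow> fib C H \<noteq> {} \<Longrightarrow> subgraph_of H K"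
begin

lemma KC: "(K, [], []) \<in> C"
proof -
  from fibK obtain a b where "(K, a, b) \<in> C" unfolding fib_def by blast
  then show ?thesis using empty_labels[OF C] by blast
qed

lemma card_eq: "card (verts K) = card (verts G)"
proof -
  obtain vs where vs: "set vs = verts G" using wf_finite[OF wG] finite_list by blast
  have NC: "((verts G, {}), vs, vs) \<in> C" using edgeless_id[OF C, of vs] vs by simp
  have wN: "wf_graph (verts G, {})" using skew_wf[OF C NC] by blast
  have "subgraph_of (verts G, {}) G"
    unfolding subgraph_of_def is_hom_def by (rule exI[of _ id]) simp
  then have "subgraph_of (verts G, {}) K" using maxK[OF wN] fib_ne[OF NC] by blast
  then obtain \<rho> where "inj_on \<rho> (verts G)" "\<rho> ` verts G \<subseteq> verts K"
    unfolding subgraph_of_def is_hom_def by auto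
  then have 1: "card (verts G) \<le> card (verts K)" using card_inj_on_le wf_finite[OF wK] by blast
  from subK obtain \<psi> where "inj_on \<psi> (verts K)" "\<psi> ` verts K \<subseteq> verts G"
    unfolding subgraph_of_def is_hom_def by auto
  then have 2: "card (verts K) \<le> card (verts G)" using card_inj_on_le wf_finite[OF wG] by blast
  from 1 2 show ?thesis by simp
qed

lemma onto:
  assumes "inj_on \<theta> (verts K)" "is_hom K G \<theta>"
  shows "\<theta> ` verts K = verts G"
proof -
  have "\<theta> ` verts K \<subseteq> verts G" using assms(2) unfolding is_hom_def by blast
  moreover have "card (\<theta> ` verts K) = card (verts G)" using card_image[OF assms(1)] card_eq by simp
  ultimately show ?thesis using card_subset_eq wf_finite[OF wG] by blast
qed

lemma emb:
  assumes th: "inj_on \<theta> (verts K)" "is_hom K G \<theta>"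
    and HC: "(H, a, b) \<in> C"
    and ph: "inj_on \<phi> (verts H)" "is_hom H G \<phi>"
    and e: "e \<in> edges H"
  shows "\<phi> ` e \<in> image \<theta> ` edges K"
proof -
  define L where "L = (\<theta> ` verts K \<union> \<phi> ` verts H, image \<theta> ` edges K \<union> image \<phi> ` edges H)"
  have LC: "(L, map \<theta> [] @ map \<phi> a, map \<theta> [] @ map \<phi> b) \<in> C"
    unfolding L_def by (rule glue_mem[OF C KC HC th(1) ph(1)])
  have wL: "wf_graph L" using skew_wf[OF C LC] by blast
  have "subgraph_of L G"
    unfolding subgraph_of_def
  proof (rule exI[of _ id], intro conjI)
    show "is_hom L G id" using th(2) ph(2) unfolding is_hom_def L_def by auto
  qed simp
  then have "subgraph_of L K" using maxK[OF wL _ fib_ne[OF LC]] by blast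
  then obtain \<rho> where "inj_on \<rho> (verts L)" "is_hom L K \<rho>" unfolding subgraph_of_def by blast
  then have le: "card (edges L) \<le> card (edges K)" using edge_card_le wL wK by blast
  have sub: "image \<theta> ` edges K \<subseteq> edges L" unfolding L_def by simp
  have "image \<theta> ` edges K = edges L"
    using card_subset_eq[OF wf_edges_finite[OF wL] sub] le edge_card_image[OF wK th(1)]
      card_mono[OF wf_edges_finite[OF wL] sub] by simp
  moreover have "\<phi> ` e \<in> edges L" using e unfolding L_def by simp
  ultimately show ?thesis by simp
qed

lemma aut_from:
  assumes p1: "inj_on \<psi> (verts K)" and p2: "is_hom K G \<psi>"
    and t1: "inj_on \<theta> (verts K)" and t2: "is_hom K G \<theta>"
  shows "is_iso K K (inv_into (verts K) \<psi> \<circ> \<theta>)"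
proof -
  let ?s = "inv_into (verts K) \<psi> \<circ> \<theta>"
  have bp: "bij_betw \<psi> (verts K) (verts G)" using p1 onto[OF p1 p2] unfolding bij_betw_def by blast
  have bt: "bij_betw \<theta> (verts K) (verts G)" using t1 onto[OF t1 t2] unfolding bij_betw_def by blast
  have bs: "bij_betw ?s (verts K) (verts K)" using bij_betw_trans[OF bt bij_betw_inv_into[OF bp]] .
  have fwd: "?s ` e \<in> edges K" if e: "e \<in> edges K" for e
  proof -
    have "\<theta> ` e \<in> image \<psi> ` edges K" using emb[OF p1 p2 KC t1 t2 e] .
    then obtain e0 where e0: "e0 \<in> edges K" "\<theta> ` e = \<psi> ` e0" by blast
    have "e0 \<subseteq> verts K" using wf_edge_sub[OF wK e0(1)] .
    then have "inv_into (verts K) \<psi> ` \<psi> ` e0 = e0" using inv_into_image_cancel[OF p1] by blast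
    moreover have "?s ` e = inv_into (verts K) \<psi> ` \<theta> ` e" by (rule image_comp[symmetric])
    ultimately have "?s ` e = e0" using e0(2) by simp
    then show ?thesis using e0(1) by simp
  qed
  have si: "inj_on ?s (verts K)" using bs bij_betw_imp_inj_on by blast
  have "image ?s ` edges K = edges K"
    by (rule endo_inj_surj[OF wf_edges_finite[OF wK]]) (use fwd edge_card_image(2)[OF wK si] in auto)
  have "e \<in> edges K \<longleftrightarrow> ?s ` e \<in> edges K" if es: "e \<subseteq> verts K" for e
  proof
    assume "?s ` e \<in> edges K"
    then have "?s ` e \<in> image ?s ` edges K" using \<open>image ?s ` edges K = edges K\<close> by simp
    then obtain e0 where e0: "e0 \<in> edges K" "?s ` e = ?s ` e0" by blast
    have "e0 \<in> Pow (verts K)" "e \<in> Pow (verts K)" using wf_edge_sub[OF wK e0(1)] es by auto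
    then have "e = e0" using inj_onD[OF inj_on_image_Pow[OF si] e0(2)] by blast
    then show "e \<in> edges K" using e0(1) by simp
  qed (rule fwd)
  then show ?thesis unfolding is_iso_def using bs by blast
qed

lemma Phi_onto: "\<theta> \<in> Phi G K \<Longrightarrow> \<theta> ` verts K = verts G"
  using onto Phi_D by blast

lemma inv_facts:
  assumes "\<theta> \<in> Phi G K"
  shows "\<And>x. x \<in> verts G \<Longrightarrow> \<theta> (inv_into (verts K) \<theta> x) = x"
    "\<And>x. x \<in> verts G \<Longrightarrow> inv_into (verts K) \<theta> x \<in> verts K"
    "\<And>y. y \<in> verts K \<Longrightarrow> inv_into (verts K) \<theta> (\<theta> y) = y"
proof -
  have o: "\<theta> ` verts K = verts G" using Phi_onto[OF assms] .
  have i: "inj_on \<theta> (verts K)" using Phi_D(1)[OF assms] .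
  show "\<And>x. x \<in> verts G \<Longrightarrow> \<theta> (inv_into (verts K) \<theta> x) = x" using o by (simp add: f_inv_into_f)
  show "\<And>x. x \<in> verts G \<Longrightarrow> inv_into (verts K) \<theta> x \<in> verts K" using o by (metis inv_into_into)
  show "\<And>y. y \<in> verts K \<Longrightarrow> inv_into (verts K) \<theta> (\<theta> y) = y" using i by simp
qed

lemma trans_Phi:
  assumes ps: "\<psi> \<in> Phi G K" and th: "\<theta> \<in> Phi G K"
    and wH: "wf_graph H" and ph: "\<phi> \<in> Phi G H"
    and em: "\<And>e. e \<in> edges H \<Longrightarrow> \<phi> ` e \<in> image \<psi> ` edges K"
  shows "restrict (\<lambda>v. \<theta> (inv_into (verts K) \<psi> (\<phi> v))) (verts H) \<in> Phi G H"
proof -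
  let ?g = "\<lambda>v. \<theta> (inv_into (verts K) \<psi> (\<phi> v))"
  note pv = Phi_D(4)[OF ph]
  note I = inv_facts[OF ps]
  have "inj_on ?g (verts H)"
  proof
    fix x y assume xy: "x \<in> verts H" "y \<in> verts H" "?g x = ?g y"
    have "inv_into (verts K) \<psi> (\<phi> x) = inv_into (verts K) \<psi> (\<phi> y)"
      using inj_onD[OF Phi_D(1)[OF th] xy(3)] I(2)[OF pv[OF xy(1)]] I(2)[OF pv[OF xy(2)]] by blast
    then have "\<phi> x = \<phi> y" using I(1)[OF pv[OF xy(1)]] I(1)[OF pv[OF xy(2)]] by metis
    then show "x = y" using inj_onD[OF Phi_D(1)[OF ph]] xy(1,2) by blast
  qed
  moreover have "is_hom H G ?g"
    unfolding is_hom_def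
  proof (intro conjI ballI)
    show "?g ` verts H \<subseteq> verts G"
      using Phi_D(2)[OF th] I(2) pv unfolding is_hom_def by blast
    fix e assume e: "e \<in> edges H"
    obtain e0 where e0: "e0 \<in> edges K" "\<phi> ` e = \<psi> ` e0" using em[OF e] by blast
    have "e0 \<subseteq> verts K" using wf_edge_sub[OF wK e0(1)] .
    then have "inv_into (verts K) \<psi> ` \<psi> ` e0 = e0" using inv_into_image_cancel[OF Phi_D(1)[OF ps]] by blast
    then have "?g ` e = \<theta> ` e0" using e0(2) by (metis image_image)
    then show "?g ` e \<in> edges G" using Phi_D(2)[OF th] e0(1) unfolding is_hom_def by simp
  qed
  ultimately show ?thesis using restrict_Phi[OF wH] by blast
qed

lemma em_Phi:
  assumes "\<theta> \<in> Phi G K" "(H, a, b) \<in> C" "\<phi> \<in> Phi G H" "e \<in> edges H"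
  shows "\<phi> ` e \<in> image \<theta> ` edges K"
  using emb[OF Phi_D(1)[OF assms(1)] Phi_D(2)[OF assms(1)] assms(2) Phi_D(1)[OF assms(3)] Phi_D(2)[OF assms(3)] assms(4)] .

lemma count:
  assumes HC: "(H, a, b) \<in> C" and ps: "\<psi> \<in> Phi G K"
  shows "card {\<phi>' \<in> Phi G H. map \<phi>' a = i \<and> map \<phi>' b = j} * card (Phi G K) =
     (\<Sum>\<phi>\<in>Phi G H. card {\<theta> \<in> Phi G K. map \<theta> (map (\<lambda>v. inv_into (verts K) \<psi> (\<phi> v)) a) = i \<and>
                                         map \<theta> (map (\<lambda>v. inv_into (verts K) \<psi> (\<phi> v)) b) = j})"
proof -
  have wH: "wf_graph H" and sa: "set a \<subseteq> verts H" and sb: "set b \<subseteq> verts H"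
    using skew_wf[OF C HC] by auto
  have fG: "finite (verts G)" using wf_finite[OF wG] .
  let ?A = "{\<phi>' \<in> Phi G H. map \<phi>' a = i \<and> map \<phi>' b = j}"
  let ?B = "\<lambda>\<phi>. {\<theta> \<in> Phi G K. map \<theta> (map (\<lambda>v. inv_into (verts K) \<psi> (\<phi> v)) a) = i \<and>
                                         map \<theta> (map (\<lambda>v. inv_into (verts K) \<psi> (\<phi> v)) b) = j}"
  let ?S = "Sigma (Phi G H) ?B"
  let ?F = "\<lambda>p. (restrict (\<lambda>v. snd p (inv_into (verts K) \<psi> (fst p v))) (verts H), snd p)"
  let ?F' = "\<lambda>q. (restrict (\<lambda>v. \<psi> (inv_into (verts K) (snd q) (fst q v))) (verts H), snd q)"
  note IP = inv_facts[OF ps]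
  have bij: "bij_betw ?F ?S (?A \<times> Phi G K)"
  proof (rule bij_betw_byWitness[where f'="?F'"])
    show "\<forall>p\<in>?S. ?F' (?F p) = p"
    proof
      fix p assume p: "p \<in> ?S"
      obtain \<phi> \<theta> where pe: "p = (\<phi>, \<theta>)" and ph: "\<phi> \<in> Phi G H" and th: "\<theta> \<in> Phi G K"
        using p by auto
      note IT = inv_facts[OF th]
      have "restrict (\<lambda>v. \<psi> (inv_into (verts K) \<theta> (restrict (\<lambda>v. \<theta> (inv_into (verts K) \<psi> (\<phi> v))) (verts H) v))) (verts H) = \<phi>"
      proof (rule restrict_eq_ext[OF Phi_D(3)[OF ph]])
        fix v assume v: "v \<in> verts H"
        have "\<phi> v \<in> verts G" using Phi_D(4)[OF ph v] .
        then show "\<psi> (inv_into (verts K) \<theta> (restrict (\<lambda>v. \<theta> (inv_into (verts K) \<psi> (\<phi> v))) (verts H) v)) = \<phi> v"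
          using v IP IT by simp
      qed
      then show "?F' (?F p) = p" using pe by simp
    qed
    show "\<forall>q\<in>?A \<times> Phi G K. ?F (?F' q) = q"
    proof
      fix q assume q: "q \<in> ?A \<times> Phi G K"
      obtain \<phi> \<theta> where pe: "q = (\<phi>, \<theta>)" and ph: "\<phi> \<in> Phi G H" and th: "\<theta> \<in> Phi G K"
        using q by auto
      note IT = inv_facts[OF th]
      have "restrict (\<lambda>v. \<theta> (inv_into (verts K) \<psi> (restrict (\<lambda>v. \<psi> (inv_into (verts K) \<theta> (\<phi> v))) (verts H) v))) (verts H) = \<phi>"
      proof (rule restrict_eq_ext[OF Phi_D(3)[OF ph]])
        fix v assume v: "v \<in> verts H"
        have "\<phi> v \<in> verts G" using Phi_D(4)[OF ph v] .
        then show "\<theta> (inv_into (verts K) \<psi> (restrict (\<lambda>v. \<psi> (inv_into (verts K) \<theta> (\<phi> v))) (verts H) v)) = \<phi> v"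
          using v IP IT by simp
      qed
      then show "?F (?F' q) = q" using pe by simp
    qed
    show "?F ` ?S \<subseteq> ?A \<times> Phi G K"
    proof
      fix r assume "r \<in> ?F ` ?S"
      then obtain \<phi> \<theta> where r: "r = ?F (\<phi>, \<theta>)" and ph: "\<phi> \<in> Phi G H" and th: "\<theta> \<in> ?B \<phi>"
        by auto
      have th': "\<theta> \<in> Phi G K" using th by blast
      let ?n = "restrict (\<lambda>v. \<theta> (inv_into (verts K) \<psi> (\<phi> v))) (verts H)"
      have "?n \<in> Phi G H" by (rule trans_Phi[OF ps th' wH ph em_Phi[OF ps HC ph]])
      moreover have m1: "map ?n a = map \<theta> (map (\<lambda>v. inv_into (verts K) \<psi> (\<phi> v)) a)"
        "map ?n b = map \<theta> (map (\<lambda>v. inv_into (verts K) \<psi> (\<phi> v)) b)"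
        using sa sb by auto
      moreover have m2: "map \<theta> (map (\<lambda>v. inv_into (verts K) \<psi> (\<phi> v)) a) = i"
        "map \<theta> (map (\<lambda>v. inv_into (verts K) \<psi> (\<phi> v)) b) = j" using th by blast+
      ultimately have "?n \<in> ?A" by (simp only: mem_Collect_eq simp_thms)
      then show "r \<in> ?A \<times> Phi G K" using r th' by simp
    qed
    show "?F' ` (?A \<times> Phi G K) \<subseteq> ?S"
    proof
      fix r assume "r \<in> ?F' ` (?A \<times> Phi G K)"
      then obtain \<phi> \<theta> where r: "r = ?F' (\<phi>, \<theta>)" and ph: "\<phi> \<in> ?A" and th: "\<theta> \<in> Phi G K"
        by auto
      have ph': "\<phi> \<in> Phi G H" using ph by blast
      note IT = inv_facts[OF th]
      let ?n = "restrict (\<lambda>v. \<psi> (inv_into (verts K) \<theta> (\<phi> v))) (verts H)"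
      have nP: "?n \<in> Phi G H" by (rule trans_Phi[OF th ps wH ph' em_Phi[OF th HC ph']])
      have pt: "\<theta> (inv_into (verts K) \<psi> (?n v)) = \<phi> v" if v: "v \<in> verts H" for v
      proof -
        have "\<phi> v \<in> verts G" using Phi_D(4)[OF ph' v] .
        then show ?thesis using v IP IT by simp
      qed
      have "map \<theta> (map (\<lambda>v. inv_into (verts K) \<psi> (?n v)) a) = map \<phi> a"
        "map \<theta> (map (\<lambda>v. inv_into (verts K) \<psi> (?n v)) b) = map \<phi> b"
        using sa sb pt by auto
      moreover have "map \<phi> a = i" "map \<phi> b = j" using ph by blast+
      ultimately have "\<theta> \<in> ?B ?n" using th by (simp only: mem_Collect_eq simp_thms)
      then show "r \<in> ?S" using r nP by simp
    qed
  qed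
  have fH: "finite (Phi G H)" using finite_Phi[OF wH fG] .
  have fK: "finite (Phi G K)" using finite_Phi[OF wK fG] .
  have "card ?S = card (?A \<times> Phi G K)" using bij_betw_same_card[OF bij] .
  also have "\<dots> = card ?A * card (Phi G K)" by (rule card_cartesian_product)
  finally have "card ?S = card ?A * card (Phi G K)" .
  moreover have "card ?S = (\<Sum>\<phi>\<in>Phi G H. card (?B \<phi>))"
    by (rule card_SigmaI[OF fH]) (use fK in auto)
  ultimately show ?thesis by simp
qed

lemma Phi_ne: "\<exists>\<psi>. \<psi> \<in> Phi G K"
proof -
  obtain \<psi> where "inj_on \<psi> (verts K)" "is_hom K G \<psi>" using subK unfolding subgraph_of_def by blast
  then show ?thesis using restrict_Phi[OF wK] by blast
qed

lemma KCmap: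
  assumes HC: "(H, a, b) \<in> C" and ps: "\<psi> \<in> Phi G K" and ph: "\<phi> \<in> Phi G H"
  shows "(K, map (\<lambda>v. inv_into (verts K) \<psi> (\<phi> v)) a, map (\<lambda>v. inv_into (verts K) \<psi> (\<phi> v)) b) \<in> C"
proof -
  let ?x = "\<lambda>v. inv_into (verts K) \<psi> (\<phi> v)"
  note IP = inv_facts[OF ps]
  have wH: "wf_graph H" using skew_wf[OF C HC] by blast
  have inj: "inj_on ?x (verts H)"
  proof
    fix u v assume uv: "u \<in> verts H" "v \<in> verts H" "?x u = ?x v"
    then have "\<phi> u = \<phi> v" using IP(1)[OF Phi_D(4)[OF ph uv(1)]] IP(1)[OF Phi_D(4)[OF ph uv(2)]] by metis
    then show "u = v" using inj_onD[OF Phi_D(1)[OF ph]] uv(1,2) by blast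
  qed
  have L: "(?x ` verts H \<union> id ` verts K, image ?x ` edges H \<union> image id ` edges K) = K"
  proof -
    have "?x ` verts H \<subseteq> verts K" using IP(2) Phi_D(4)[OF ph] by blast
    moreover have "image ?x ` edges H \<subseteq> edges K"
    proof
      fix e' assume "e' \<in> image ?x ` edges H"
      then obtain e where e: "e \<in> edges H" "e' = ?x ` e" by blast
      obtain e0 where e0: "e0 \<in> edges K" "\<phi> ` e = \<psi> ` e0" using em_Phi[OF ps HC ph e(1)] by blast
      have "e0 \<subseteq> verts K" using wf_edge_sub[OF wK e0(1)] .
      then have "inv_into (verts K) \<psi> ` \<psi> ` e0 = e0" using inv_into_image_cancel[OF Phi_D(1)[OF ps]] by blast
      then have "e' = e0" using e(2) e0(2) by (metis image_image)
      then show "e' \<in> edges K" using e0(1) by simp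
    qed
    ultimately show ?thesis using graph_eta[of K] by (simp add: Un_absorb1)
  qed
  have "((?x ` verts H \<union> id ` verts K, image ?x ` edges H \<union> image id ` edges K),
         map ?x a @ map id [], map ?x b @ map id []) \<in> C"
    by (rule glue_mem[OF C HC KC inj]) simp
  then show ?thesis unfolding L by simp
qed

lemma span_elem:
  assumes HC: "(H, a, b) \<in> C"
  shows "That G (H, a, b) \<in> tm.span (That_cls G K ` WC C K (length a) (length b))"
proof -
  obtain \<psi> where ps: "\<psi> \<in> Phi G K" using Phi_ne by blast
  have fG: "finite (verts G)" using wf_finite[OF wG] .
  have wH: "wf_graph H" using skew_wf[OF C HC] by blast
  let ?N = "card (Phi G K)"
  have Npos: "?N > 0" using ps finite_Phi[OF wK fG] card_gt_0_iff by blast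
  let ?x = "\<lambda>\<phi> v. inv_into (verts K) \<psi> (\<phi> v)"
  let ?T = "\<lambda>\<phi>. That G (K, map (?x \<phi>) a, map (?x \<phi>) b)"
  have eq: "That G (H, a, b) = (\<Sum>\<phi>\<in>Phi G H. tscale (1 / of_nat ?N) (?T \<phi>))"
  proof (rule ext, rule ext)
    fix j i
    have S: "(\<Sum>\<phi>\<in>Phi G H. ?T \<phi> j i) = of_nat (card {\<phi>' \<in> Phi G H. map \<phi>' a = i \<and> map \<phi>' b = j} * ?N)"
    proof -
      have "(\<Sum>\<phi>\<in>Phi G H. ?T \<phi> j i) = (\<Sum>\<phi>\<in>Phi G H. of_nat (card {\<theta> \<in> Phi G K. map \<theta> (map (?x \<phi>) a) = i \<and> map \<theta> (map (?x \<phi>) b) = j}))"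
        by (rule sum.cong) (simp_all only: That_eq)
      also have "\<dots> = of_nat (\<Sum>\<phi>\<in>Phi G H. card {\<theta> \<in> Phi G K. map \<theta> (map (?x \<phi>) a) = i \<and> map \<theta> (map (?x \<phi>) b) = j})"
        by (rule of_nat_sum[symmetric])
      also have "\<dots> = of_nat (card {\<phi>' \<in> Phi G H. map \<phi>' a = i \<and> map \<phi>' b = j} * ?N)"
        by (simp only: count[OF HC ps, of i j])
      finally show ?thesis .
    qed
    have "(\<Sum>\<phi>\<in>Phi G H. tscale (1 / of_nat ?N) (?T \<phi>)) j i
        = (\<Sum>\<phi>\<in>Phi G H. (1 / of_nat ?N) * ?T \<phi> j i)"
      by (simp only: sum_fun_app2 tscale_def)
    also have "\<dots> = (1 / of_nat ?N) * (\<Sum>\<phi>\<in>Phi G H. ?T \<phi> j i)" by (simp only: sum_distrib_left)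
    also have "\<dots> = (1 / of_nat ?N) * of_nat (card {\<phi>' \<in> Phi G H. map \<phi>' a = i \<and> map \<phi>' b = j} * ?N)"
      by (simp only: S)
    also have "\<dots> = of_nat (card {\<phi>' \<in> Phi G H. map \<phi>' a = i \<and> map \<phi>' b = j})"
      using Npos by simp
    also have "\<dots> = That G (H, a, b) j i" by (simp only: That_eq)
    finally show "That G (H, a, b) j i = (\<Sum>\<phi>\<in>Phi G H. tscale (1 / of_nat ?N) (?T \<phi>)) j i" by simp
  qed
  have "?T \<phi> \<in> That_cls G K ` WC C K (length a) (length b)" if ph: "\<phi> \<in> Phi G H" for \<phi>
  proof -
    have KC': "(K, map (?x \<phi>) a, map (?x \<phi>) b) \<in> C" using KCmap[OF HC ps ph] .
    have sc: "set (map (?x \<phi>) a) \<subseteq> verts K" "set (map (?x \<phi>) b) \<subseteq> verts K"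
      using skew_wf[OF C KC'] by auto
    have "lclass K (map (?x \<phi>) a) (map (?x \<phi>) b) \<in> WC C K (length a) (length b)"
      unfolding WC_def W_def using sc KC' by (intro CollectI conjI exI[of _ "map (?x \<phi>) a"] exI[of _ "map (?x \<phi>) b"]) simp_all
    moreover have "That_cls G K (lclass K (map (?x \<phi>) a) (map (?x \<phi>) b)) = ?T \<phi>"
      using That_cls_eq[OF wK fG sc] .
    ultimately show ?thesis by (metis image_eqI)
  qed
  then have "(\<Sum>\<phi>\<in>Phi G H. tscale (1 / of_nat ?N) (?T \<phi>)) \<in> tm.span (That_cls G K ` WC C K (length a) (length b))"
    by (intro tm.span_sum tm.span_scale tm.span_base)
  then show ?thesis using eq by simp
qed

lemma own_nz:
  assumes w: "w \<in> WC C K k l" and ps: "\<psi> \<in> Phi G K"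
  shows "That_cls G K w (map \<psi> (snd (rep w))) (map \<psi> (fst (rep w))) \<noteq> 0"
proof -
  let ?S = "{\<theta> \<in> Phi G K. map \<theta> (fst (rep w)) = map \<psi> (fst (rep w)) \<and> map \<theta> (snd (rep w)) = map \<psi> (snd (rep w))}"
  have fin: "finite ?S" by (rule finite_subset[OF _ finite_Phi[OF wK wf_finite[OF wG]]]) blast
  have "\<psi> \<in> ?S" using ps by blast
  then have "?S \<noteq> {}" by blast
  then have "card ?S \<noteq> 0" using card_0_eq[OF fin] by blast
  then have "(of_nat (card ?S) :: complex) \<noteq> 0" by (simp only: of_nat_eq_0_iff not_False_eq_True)
  then show ?thesis unfolding That_cls_alt That_eq .
qed

lemma sep:
  assumes w1: "w1 \<in> WC C K k l" and w2: "w2 \<in> WC C K k' l'" and ps: "\<psi> \<in> Phi G K"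
    and nz: "That_cls G K w2 (map \<psi> (snd (rep w1))) (map \<psi> (fst (rep w1))) \<noteq> 0"
  shows "w1 = w2"
proof -
  let ?c = "fst (rep w1)" and ?d = "snd (rep w1)" and ?c2 = "fst (rep w2)" and ?d2 = "snd (rep w2)"
  note R1 = WC_rep[OF w1 C] and R2 = WC_rep[OF w2 C]
  let ?X = "{\<theta> \<in> Phi G K. map \<theta> ?c2 = map \<psi> ?c \<and> map \<theta> ?d2 = map \<psi> ?d}"
  have h: "(of_nat (card ?X) :: complex) \<noteq> 0"
    using nz unfolding That_cls_alt That_eq .
  have "card ?X \<noteq> 0" using h by (metis of_nat_0)
  then have "?X \<noteq> {}" by (metis card.empty)
  then obtain \<theta> where "\<theta> \<in> ?X" by blast
  then have th: "\<theta> \<in> Phi G K" "map \<theta> ?c2 = map \<psi> ?c" "map \<theta> ?d2 = map \<psi> ?d" by blast+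
  let ?s = "inv_into (verts K) \<psi> \<circ> \<theta>"
  have iso: "is_iso K K ?s" using aut_from[OF Phi_D(1,2)[OF ps] Phi_D(1,2)[OF th(1)]] .
  have bk: "map (inv_into (verts K) \<psi>) (map \<psi> x) = x" if "set x \<subseteq> verts K" for x
    using that inv_facts(3)[OF ps] by (induction x) auto
  have "map ?s ?c2 = map (inv_into (verts K) \<psi>) (map \<theta> ?c2)" by simp
  then have e1: "map ?s ?c2 = ?c" using th(2) bk[OF R1(1)] by simp
  have "map ?s ?d2 = map (inv_into (verts K) \<psi>) (map \<theta> ?d2)" by simp
  then have e2: "map ?s ?d2 = ?d" using th(3) bk[OF R1(2)] by simp
  have "(?c, ?d) \<in> lclass K ?c2 ?d2" unfolding lclass_def Aut_def
    by (rule CollectI, rule exI[of _ ?s]) (simp only: e1 e2 mem_Collect_eq iso simp_thms)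
  then have "lclass K ?c ?d = lclass K ?c2 ?d2" using lclass_sym[OF R2(1,2)] by blast
  then show ?thesis using R1(6) R2(6) by simp
qed

end

theorem proposition4p16:
  fixes C :: "blg set" and G K :: graph
  assumes "skew_graph_category C"
    and "wf_graph G"
    and "wf_graph K"
    and "subgraph_of K G"
    and "fib C K \<noteq> {}"
    and "\<And>H. wf_graph H \<Longrightarrow> subgraph_of H G \<Longrightarrow> fib C H \<noteq> {} \<Longrightarrow> subgraph_of H K"
  shows "\<forall>k l. inj_on (That_cls G K) (WC C K k l) \<and>
            \<not> module.dependent tscale (That_cls G K ` WC C K k l) \<and>
            module.span tscale (That_cls G K ` WC C K k l) = CG C G k l"
proof (intro allI conjI)
  fix k l
  interpret S: gsetup C G K by (rule gsetup.intro) (fact assms)+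
  obtain \<psi> where ps: "\<psi> \<in> Phi G K" using S.Phi_ne by blast
  show inj: "inj_on (That_cls G K) (WC C K k l)"
  proof
    fix w1 w2 assume w: "w1 \<in> WC C K k l" "w2 \<in> WC C K k l" "That_cls G K w1 = That_cls G K w2"
    have "That_cls G K w2 (map \<psi> (snd (rep w1))) (map \<psi> (fst (rep w1))) \<noteq> 0"
      using S.own_nz[OF w(1) ps] w(3) by simp
    then show "w1 = w2" using S.sep[OF w(1) w(2) ps] by blast
  qed
  show "\<not> module.dependent tscale (That_cls G K ` WC C K k l)"
  proof
    assume "module.dependent tscale (That_cls G K ` WC C K k l)"
    then obtain t u where tu: "finite t" "t \<subseteq> That_cls G K ` WC C K k l"
      "(\<Sum>v\<in>t. tscale (u v) v) = 0" "\<exists>v\<in>t. u v \<noteq> 0"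
      unfolding tm.dependent_explicit by blast
    then obtain v where v: "v \<in> t" "u v \<noteq> 0" by blast
    then obtain w where w: "w \<in> WC C K k l" "v = That_cls G K w" using tu(2) by blast
    let ?j = "map \<psi> (snd (rep w))" and ?i = "map \<psi> (fst (rep w))"
    have z: "v' ?j ?i = 0" if vt: "v' \<in> t" and vn: "v' \<noteq> v" for v'
    proof -
      obtain w' where w': "w' \<in> WC C K k l" "v' = That_cls G K w'" using tu(2) vt by blast
      have "w \<noteq> w'" using vn w w' by blast
      then show ?thesis using S.sep[OF w(1) w'(1) ps] w'(2) by blast
    qed
    have "0 = (\<Sum>v'\<in>t. tscale (u v') v') ?j ?i" by (simp only: tu(3) zero_fun_apply)
    also have "\<dots> = (\<Sum>v'\<in>t. u v' * v' ?j ?i)" by (simp only: sum_fun_app2 tscale_def)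
    also have "\<dots> = u v * v ?j ?i + (\<Sum>v'\<in>t - {v}. u v' * v' ?j ?i)"
      by (rule sum.remove[OF tu(1) v(1)])
    also have "(\<Sum>v'\<in>t - {v}. u v' * v' ?j ?i) = 0"
    proof (rule sum.neutral, rule ballI)
      fix x assume "x \<in> t - {v}"
      then have "x ?j ?i = 0" using z by blast
      then show "u x * x ?j ?i = 0" by simp
    qed
    also have "u v * v ?j ?i + 0 = u v * v ?j ?i" by simp
    finally have "u v * v ?j ?i = 0" by simp
    moreover have "v ?j ?i \<noteq> 0" using S.own_nz[OF w(1) ps] w(2) by simp
    ultimately show False using v(2) by simp
  qed
  let ?I = "That_cls G K ` WC C K k l"
  let ?X = "{That G (H, a, b) | H a b. (H, a, b) \<in> C \<and> length a = k \<and> length b = l}"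
  have IX: "?I \<subseteq> ?X"
  proof
    fix x assume "x \<in> ?I"
    then obtain w where w: "w \<in> WC C K k l" "x = That_cls G K w" by blast
    note R = WC_rep[OF w(1) assms(1)]
    have "x = That G (K, fst (rep w), snd (rep w))" using w(2) That_cls_alt by simp
    then show "x \<in> ?X" using R(3,4,5) by blast
  qed
  have XI: "?X \<subseteq> tm.span ?I"
  proof
    fix x assume "x \<in> ?X"
    then obtain H a b where x: "x = That G (H, a, b)" "(H, a, b) \<in> C" "length a = k" "length b = l" by blast
    show "x \<in> tm.span ?I" using S.span_elem[OF x(2)] x by simp
  qed
  have "tm.span ?I \<subseteq> tm.span ?X" using tm.span_mono[OF IX] .
  moreover have "tm.span ?X \<subseteq> tm.span ?I" using tm.span_mono[OF XI] tm.span_span by blast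
  ultimately show "module.span tscale ?I = CG C G k l" unfolding CG_def by blast
qed

end
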